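(* Let $1\le r\le s\le t$ and let $u=ABCd$, $v=A'B'C'd'$ be vertices of $E3C(r,s,t)$ with $A\ne A'$, $B=B'$, $C\ne C'$ and $d=d'$. Then there exist $2r+2$ pairwise internally disjoint $u$–$v$ paths in $E3C(r,s,t)$, each of length at most $r+t+7$ if $d\in\{0,2\}$, and each of length at most $r+t+5$ if $d=1$.
   Context: The exchanged 3-ary $n$-cube $E3C(r,s,t)$ ($r,s,t\ge1$, $n=r+s+t+1$): vertices are strings written $x=ABCd$ with $A\in\{0,1,2\}^r$, $B\in\{0,1,2\}^s$, $C\in\{0,1,2\}^t$, $d\in\{0,1,2\}$. Two distinct vertices $x=ABCd$, $y=A'B'C'd'$ are adjacent iff one of: (E0) $A=A',B=B',C=C'$ and $d\ne d'$; (E1) $d=d'=0$, $A=A'$, $B=B'$ and $C,C'$ differ in exactly one position; (E2) $d=d'=1$, $A=A'$, $C=C'$ and $B,B'$ differ in exactly one position; (E3) $d=d'=2$, $B=B'$, $C=C'$ and $A,A'$ differ in exactly one position. Paths are internally disjoint if they share no vertices other than their endpoints; length = number of edges. *)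

theory Defs
  imports Main
begin

text \<open>Vertices of E3C(r,s,t): a vertex ABCd is represented as the tuple (A,B,C,d)
  with A,B,C words over {0,1,2} (lists of naturals < 3) of lengths r,s,t and d < 3.\<close>

type_synonym e3vert = "nat list \<times> nat list \<times> nat list \<times> nat"

definition ternary_word :: "nat \<Rightarrow> nat list \<Rightarrow> bool" where
  "ternary_word k w \<longleftrightarrow> length w = k \<and> (\<forall>x\<in>set w. x < 3)"

definition e3c_vertex :: "nat \<Rightarrow> nat \<Rightarrow> nat \<Rightarrow> e3vert \<Rightarrow> bool" where
  "e3c_vertex r s t x \<longleftrightarrow>
     (case x of (A, B, C, d) \<Rightarrow> ternary_word r A \<and> ternary_word s B \<and> ternary_word t C \<and> d < 3)"

definition differ_one :: "nat list \<Rightarrow> nat list \<Rightarrow> bool" where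
  "differ_one X Y \<longleftrightarrow> length X = length Y \<and> card {i. i < length X \<and> X ! i \<noteq> Y ! i} = 1"

definition e3c_adj :: "nat \<Rightarrow> nat \<Rightarrow> nat \<Rightarrow> e3vert \<Rightarrow> e3vert \<Rightarrow> bool" where
  "e3c_adj r s t x y \<longleftrightarrow> e3c_vertex r s t x \<and> e3c_vertex r s t y \<and> x \<noteq> y \<and>
     (case x of (A, B, C, d) \<Rightarrow> case y of (A', B', C', d') \<Rightarrow>
        (A = A' \<and> B = B' \<and> C = C' \<and> d \<noteq> d') \<or>
        (d = 0 \<and> d' = 0 \<and> A = A' \<and> B = B' \<and> differ_one C C') \<or>
        (d = 1 \<and> d' = 1 \<and> A = A' \<and> C = C' \<and> differ_one B B') \<or>
        (d = 2 \<and> d' = 2 \<and> B = B' \<and> C = C' \<and> differ_one A A'))"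

text \<open>A u-v path: a list of distinct vertices from u to v, consecutive ones adjacent.
  Its length is the number of edges, i.e. length p - 1.\<close>
definition e3c_path :: "nat \<Rightarrow> nat \<Rightarrow> nat \<Rightarrow> e3vert \<Rightarrow> e3vert \<Rightarrow> e3vert list \<Rightarrow> bool" where
  "e3c_path r s t u v p \<longleftrightarrow> p \<noteq> [] \<and> hd p = u \<and> last p = v \<and> distinct p \<and>
     (\<forall>i. Suc i < length p \<longrightarrow> e3c_adj r s t (p ! i) (p ! Suc i))"

definition internally_disjoint :: "e3vert \<Rightarrow> e3vert \<Rightarrow> e3vert list list \<Rightarrow> bool" where
  "internally_disjoint u v Ps \<longleftrightarrow>
     (\<forall>i j. i < length Ps \<and> j < length Ps \<and> i \<noteq> j \<longrightarrow> set (Ps ! i) \<inter> set (Ps ! j) \<subseteq> {u, v})"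

end

theory Submission
  imports Defs
begin


definition ov :: "nat list \<Rightarrow> nat list \<Rightarrow> nat set \<Rightarrow> nat list" where
  "ov X Y S = map (\<lambda>p. if p \<in> S then Y!p else X!p) [0..<length X]"

definition walk :: "nat list \<Rightarrow> nat list \<Rightarrow> nat list \<Rightarrow> nat list list" where
  "walk X Y ps = map (\<lambda>m. ov X Y (set (take m ps))) [0..<Suc (length ps)]"

definition dpos :: "nat list \<Rightarrow> nat list \<Rightarrow> nat list" where
  "dpos X Y = filter (\<lambda>p. X!p \<noteq> Y!p) [0..<length X]"

lemma length_ov[simp]: "length (ov X Y S) = length X"
  by (simp add: ov_def)

lemma nth_ov: "p < length X \<Longrightarrow> ov X Y S ! p = (if p \<in> S then Y!p else X!p)"
  by (simp add: ov_def)

lemma ov_empty[simp]: "ov X Y {} = X"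
  by (simp add: ov_def map_nth)

lemma ov_full: "length X = length Y \<Longrightarrow> {p. p < length X \<and> X!p \<noteq> Y!p} \<subseteq> S \<Longrightarrow> ov X Y S = Y"
  by (auto simp: list_eq_iff_nth_eq nth_ov)

lemma ov_ternary: "ternary_word n X \<Longrightarrow> ternary_word n Y \<Longrightarrow> ternary_word n (ov X Y S)"
  by (auto simp: ternary_word_def ov_def)

lemma ov_inj:
  assumes "ov X Y S = ov X Y S'" "S \<subseteq> {p. p < length X \<and> X!p \<noteq> Y!p}" "S' \<subseteq> {p. p < length X \<and> X!p \<noteq> Y!p}"
  shows "S = S'"
proof -
  have "p \<in> S \<longleftrightarrow> p \<in> S'" for p
  proof (cases "p < length X")
    case True
    then have "ov X Y S ! p = ov X Y S' ! p" using assms by simp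
    then show ?thesis using True assms(2,3) by (auto simp: nth_ov split: if_splits)
  next
    case False then show ?thesis using assms by auto
  qed
  then show ?thesis by blast
qed

lemma differ_one_ov:
  assumes "q \<notin> S" "q < length X" "X!q \<noteq> Y!q"
  shows "differ_one (ov X Y S) (ov X Y (insert q S))"
proof -
  have "{i. i < length X \<and> ov X Y S ! i \<noteq> ov X Y (insert q S) ! i} = {q}"
    using assms by (auto simp: nth_ov split: if_splits)
  then show ?thesis by (simp add: differ_one_def)
qed

definition okps :: "nat list \<Rightarrow> nat list \<Rightarrow> nat list \<Rightarrow> bool" where
  "okps X Y ps \<longleftrightarrow> length X = length Y \<and> distinct ps \<and> set ps \<subseteq> {p. p < length X \<and> X!p \<noteq> Y!p}"

lemma length_walk[simp]: "length (walk X Y ps) = Suc (length ps)"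
  by (simp add: walk_def)

lemma walk_ne[simp]: "walk X Y ps \<noteq> []"
  by (simp add: walk_def)

lemma hd_walk[simp]: "hd (walk X Y ps) = X"
  by (simp add: walk_def hd_map del: upt_Suc)

lemma last_walk: "last (walk X Y ps) = ov X Y (set ps)"
proof -
  have "last [0..<Suc (length ps)] = length ps" by simp
  then show ?thesis unfolding walk_def
    by (subst last_map) (auto simp del: upt_Suc)
qed

lemma last_walk_full: "okps X Y ps \<Longrightarrow> set ps = {p. p < length X \<and> X!p \<noteq> Y!p} \<Longrightarrow> last (walk X Y ps) = Y"
  by (simp add: last_walk okps_def ov_full)

lemma set_walk: "set (walk X Y ps) = {ov X Y (set (take m ps)) | m. m \<le> length ps}"
proof -
  have "set [0..<Suc (length ps)] = {m. m \<le> length ps}" by auto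
  then show ?thesis unfolding walk_def set_map by (auto simp del: upt_Suc)
qed

lemma walk_ternary: "ternary_word n X \<Longrightarrow> ternary_word n Y \<Longrightarrow> W \<in> set (walk X Y ps) \<Longrightarrow> ternary_word n W"
  by (auto simp: set_walk ov_ternary)

lemma distinct_walk: assumes "okps X Y ps" shows "distinct (walk X Y ps)"
proof -
  have "inj_on (\<lambda>m. ov X Y (set (take m ps))) {0..<Suc (length ps)}"
  proof (rule inj_onI)
    fix m m' assume m: "m \<in> {0..<Suc (length ps)}" "m' \<in> {0..<Suc (length ps)}"
      and e: "ov X Y (set (take m ps)) = ov X Y (set (take m' ps))"
    have "set (take m ps) = set (take m' ps)"
      using ov_inj[OF e] assms set_take_subset[of m ps] set_take_subset[of m' ps]
      unfolding okps_def by blast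
    then have "card (set (take m ps)) = card (set (take m' ps))" by simp
    then show "m = m'" using m assms unfolding okps_def
      by (simp add: distinct_card)
  qed
  then show ?thesis by (simp add: walk_def distinct_map del: upt_Suc)
qed

lemma walk_succ: assumes "okps X Y ps" shows "successively differ_one (walk X Y ps)"
  unfolding successively_conv_nth
proof (intro allI impI)
  fix i assume i: "Suc i < length (walk X Y ps)"
  then have i': "i < length ps" by simp
  have "set (take (Suc i) ps) = insert (ps!i) (set (take i ps))"
    using i' by (simp add: take_Suc_conv_app_nth)
  moreover have "ps!i \<notin> set (take i ps)" using assms i' unfolding okps_def
    using distinct_take[of ps "Suc i"] by (simp add: take_Suc_conv_app_nth)
  moreover have "ps!i < length X" "X!(ps!i) \<noteq> Y!(ps!i)" using assms i' unfolding okps_def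
    using nth_mem by blast+
  ultimately show "differ_one (walk X Y ps ! i) (walk X Y ps ! Suc i)"
    using i by (simp add: walk_def differ_one_ov del: upt_Suc)
qed

abbreviation tw where "tw \<equiv> ternary_word"

lemma e3c_path_alt: "e3c_path r s t u v p \<longleftrightarrow> p \<noteq> [] \<and> hd p = u \<and> last p = v \<and> distinct p \<and> successively (e3c_adj r s t) p"
  by (simp add: e3c_path_def successively_conv_nth)

lemma vert[simp]: "e3c_vertex r s t (A,B,C,d) \<longleftrightarrow> tw r A \<and> tw s B \<and> tw t C \<and> d < 3"
  by (simp add: e3c_vertex_def)

lemma differ_one_neq: "differ_one X Y \<Longrightarrow> X \<noteq> Y"
  by (auto simp: differ_one_def)

lemma adj_sw: "tw r A \<Longrightarrow> tw s B \<Longrightarrow> tw t C \<Longrightarrow> d < 3 \<Longrightarrow> d' < 3 \<Longrightarrow> d \<noteq> d' \<Longrightarrow>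
  e3c_adj r s t (A,B,C,d) (A,B,C,d')"
  by (simp add: e3c_adj_def)

lemma adj_A: "tw r A \<Longrightarrow> tw r A' \<Longrightarrow> tw s B \<Longrightarrow> tw t C \<Longrightarrow> differ_one A A' \<Longrightarrow>
  e3c_adj r s t (A,B,C,2) (A',B,C,2)"
  by (auto simp: e3c_adj_def dest: differ_one_neq)

lemma adj_B: "tw r A \<Longrightarrow> tw s B \<Longrightarrow> tw s B' \<Longrightarrow> tw t C \<Longrightarrow> differ_one B B' \<Longrightarrow>
  e3c_adj r s t (A,B,C,1) (A,B',C,1)"
  by (auto simp: e3c_adj_def dest: differ_one_neq)

lemma adj_B': "tw r A \<Longrightarrow> tw s B \<Longrightarrow> tw s B' \<Longrightarrow> tw t C \<Longrightarrow> differ_one B B' \<Longrightarrow>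
  e3c_adj r s t (A,B,C,Suc 0) (A,B',C,Suc 0)"
  using adj_B by simp

lemma adj_C: "tw r A \<Longrightarrow> tw s B \<Longrightarrow> tw t C \<Longrightarrow> tw t C' \<Longrightarrow> differ_one C C' \<Longrightarrow>
  e3c_adj r s t (A,B,C,0) (A,B,C',0)"
  by (auto simp: e3c_adj_def dest: differ_one_neq)

lemma layerA: assumes "tw r X" "tw r Y" "okps X Y ps" "tw s B" "tw t C"
  shows "successively (e3c_adj r s t) (map (\<lambda>W. (W,B,C,2::nat)) (walk X Y ps))"
  unfolding successively_map
  by (rule successively_mono[OF walk_succ[OF assms(3)]])
     (auto intro!: adj_A assms walk_ternary[OF assms(1,2)])

lemma layerB: assumes "tw s X" "tw s Y" "okps X Y ps" "tw r A" "tw t C"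
  shows "successively (e3c_adj r s t) (map (\<lambda>W. (A,W,C,1::nat)) (walk X Y ps))"
  unfolding successively_map
  by (rule successively_mono[OF walk_succ[OF assms(3)]])
     (rule adj_B; auto intro: assms walk_ternary[OF assms(1,2)])

lemma layerC: assumes "tw t X" "tw t Y" "okps X Y ps" "tw r A" "tw s B"
  shows "successively (e3c_adj r s t) (map (\<lambda>W. (A,B,W,0::nat)) (walk X Y ps))"
  unfolding successively_map
  by (rule successively_mono[OF walk_succ[OF assms(3)]])
     (auto intro!: adj_C assms walk_ternary[OF assms(1,2)])

lemma dpos_ok: "length X = length Y \<Longrightarrow> okps X Y (dpos X Y)"
  by (auto simp: okps_def dpos_def)

lemma set_dpos: "set (dpos X Y) = {p. p < length X \<and> X!p \<noteq> Y!p}"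
  by (auto simp: dpos_def)

lemma length_dpos: "length (dpos X Y) \<le> length X"
  unfolding dpos_def using length_filter_le[of _ "[0..<length X]"] by simp

lemma last_walk_dpos: "length X = length Y \<Longrightarrow> last (walk X Y (dpos X Y)) = Y"
  by (rule last_walk_full[OF dpos_ok]) (auto simp: set_dpos)

lemma distinct_walk_dpos: "length X = length Y \<Longrightarrow> distinct (walk X Y (dpos X Y))"
  by (rule distinct_walk[OF dpos_ok])

lemma walk_dpos_ternary: "tw n X \<Longrightarrow> tw n Y \<Longrightarrow> W \<in> set (walk X Y (dpos X Y)) \<Longrightarrow> tw n W"
  by (rule walk_ternary)

lemma idisj_map:
  assumes "distinct xs" "\<And>x y. x \<in> set xs \<Longrightarrow> y \<in> set xs \<Longrightarrow> x \<noteq> y \<Longrightarrow> set (F x) \<inter> set (F y) \<subseteq> {u,v}"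
  shows "internally_disjoint u v (map F xs)"
  unfolding internally_disjoint_def
proof (intro allI impI)
  fix i j assume h: "i < length (map F xs) \<and> j < length (map F xs) \<and> i \<noteq> j"
  then have "xs!i \<noteq> xs!j" using assms(1) by (simp add: nth_eq_iff_index_eq)
  then show "set (map F xs ! i) \<inter> set (map F xs ! j) \<subseteq> {u, v}" using h assms(2) by simp
qed

definition idx :: "nat list \<Rightarrow> nat \<Rightarrow> (nat \<times> nat) list" where
  "idx B r = concat (map (\<lambda>m. [(m,(B!m+1) mod 3),(m,(B!m+2) mod 3)]) [0..<r]) @ [(r,0),(r,1)]"

lemma length_idx: "length (idx B r) = 2*r+2"
proof -
  have "length (concat (map (\<lambda>m. [(m,(B!m+1) mod 3),(m,(B!m+2) mod 3)]) [0..<r])) = 2*r"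
    by (induct r) auto
  then show ?thesis by (simp add: idx_def)
qed

lemma set_idx: "x \<in> set (idx B r) \<Longrightarrow> (fst x < r \<and> snd x < 3 \<and> snd x \<noteq> B!fst x) \<or> (fst x = r \<and> snd x < 2)"
  by (auto simp: idx_def) presburger+

lemma distinct_idx: "distinct (idx B r)"
proof -
  have "distinct (concat (map (\<lambda>m. [(m,(B!m+1) mod 3),(m,(B!m+2) mod 3)]) [0..<r]))"
    by (induct r) (auto, presburger)
  then show ?thesis by (auto simp: idx_def)
qed



lemma upd_tw: "tw n B \<Longrightarrow> m < n \<Longrightarrow> b < 3 \<Longrightarrow> tw n (B[m:=b])"
  by (auto simp: ternary_word_def set_update_distinct dest: set_update_subset_insert[THEN subsetD])

lemma upd_neq: "m < length B \<Longrightarrow> b \<noteq> B!m \<Longrightarrow> B[m:=b] \<noteq> B"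
  by (metis nth_list_update_eq)

lemma differ_one_upd: "m < length B \<Longrightarrow> b \<noteq> B!m \<Longrightarrow> differ_one B (B[m:=b])"
proof -
  assume h: "m < length B" "b \<noteq> B!m"
  have "{i. i < length B \<and> B!i \<noteq> B[m:=b]!i} = {m}" using h by (auto simp: nth_list_update)
  then show ?thesis by (simp add: differ_one_def)
qed

lemma differ_one_sym: "differ_one X Y \<Longrightarrow> differ_one Y X"
  by (simp add: differ_one_def eq_commute)

lemma upd_inj: "m < length B \<Longrightarrow> m' < length B \<Longrightarrow> b \<noteq> B!m \<Longrightarrow> b' \<noteq> B!m' \<Longrightarrow>
  B[m:=b] = B[m':=b'] \<Longrightarrow> m = m' \<and> b = b'"
  by (metis nth_list_update_eq nth_list_update_neq)

lemma D1:
  fixes A B C A' C' :: "nat list"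
  assumes rs: "r \<le> s" and vu: "e3c_vertex r s t (A,B,C,1)" and vv: "e3c_vertex r s t (A',B,C',1)"
    and AA: "A \<noteq> A'" and CC: "C \<noteq> C'"
  shows "\<exists>Ps. length Ps = 2*r+2 \<and> internally_disjoint (A,B,C,1) (A',B,C',1) Ps \<and>
    (\<forall>p\<in>set Ps. e3c_path r s t (A,B,C,1) (A',B,C',1) p \<and> length p - 1 \<le> r+t+5)"
proof -
  have tA: "tw r A" and tA': "tw r A'" and tB: "tw s B" and tC: "tw t C" and tC': "tw t C'"
    using vu vv by auto
  have lA: "length A = r" "length A' = r" "length B = s" "length C = t" "length C' = t"
    using tA tA' tB tC tC' by (auto simp: ternary_word_def)
  define wA where "wA = walk A A' (dpos A A')"
  define wC where "wC = walk C C' (dpos C C')"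
  have wA: "wA \<noteq> []" "hd wA = A" "last wA = A'" "distinct wA" "\<And>W. W \<in> set wA \<Longrightarrow> tw r W"
    "length wA \<le> Suc r"
    using lA tA tA' length_dpos[of A A']
    by (auto simp: wA_def last_walk_dpos distinct_walk_dpos intro: walk_dpos_ternary)
  have wC: "wC \<noteq> []" "hd wC = C" "last wC = C'" "distinct wC" "\<And>W. W \<in> set wC \<Longrightarrow> tw t W"
    "length wC \<le> Suc t"
    using lA tC tC' length_dpos[of C C']
    by (auto simp: wC_def last_walk_dpos distinct_walk_dpos intro: walk_dpos_ternary)
  have sA: "\<And>B C. tw s B \<Longrightarrow> tw t C \<Longrightarrow> successively (e3c_adj r s t) (map (\<lambda>W. (W,B,C,2::nat)) wA)"
    unfolding wA_def using lA by (intro layerA tA tA' dpos_ok) auto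
  have sC: "\<And>A B. tw r A \<Longrightarrow> tw s B \<Longrightarrow> successively (e3c_adj r s t) (map (\<lambda>W. (A,B,W,0::nat)) wC)"
    unfolding wC_def using lA by (intro layerC tC tC' dpos_ok) auto
  define Q where "Q = (\<lambda>m \<beta>. (A,B,C,1::nat) # (A,B[m:=\<beta>],C,1) # map (\<lambda>W. (W,B[m:=\<beta>],C,2)) wA
     @ map (\<lambda>Y. (A',B[m:=\<beta>],Y,0)) wC @ [(A',B[m:=\<beta>],C',1),(A',B,C',1)])"
  define P0 where "P0 = (A,B,C,1::nat) # map (\<lambda>Y. (A,B,Y,0)) wC @ map (\<lambda>W. (W,B,C',2)) wA @ [(A',B,C',1)]"
  define P2 where "P2 = (A,B,C,1::nat) # map (\<lambda>W. (W,B,C,2)) wA @ map (\<lambda>Y. (A',B,Y,0)) wC @ [(A',B,C',1)]"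
  define F where "F = (\<lambda>(m,\<beta>). if m < r then Q m \<beta> else if \<beta> = 0 then P0 else P2)"
  have Qok: "e3c_path r s t (A,B,C,1) (A',B,C',1) (Q m \<beta>) \<and> length (Q m \<beta>) - 1 \<le> r+t+5"
    if m: "m < r" "\<beta> < 3" "\<beta> \<noteq> B!m" for m \<beta>
  proof -
    have tBm: "tw s (B[m:=\<beta>])" using upd_tw[OF tB] m rs by auto
    have nB: "B[m:=\<beta>] \<noteq> B" using upd_neq[of m B \<beta>] m rs lA by auto
    have dB: "differ_one B (B[m:=\<beta>])" "differ_one (B[m:=\<beta>]) B"
      using differ_one_upd[of m B \<beta>] m rs lA differ_one_sym by auto
    have "successively (e3c_adj r s t) (Q m \<beta>)"
      unfolding Q_def using sA[OF tBm tC] sC[OF tA' tBm]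
      by (simp add: successively_append_iff successively_Cons hd_map last_map wA(1,2,3) wC(1,2,3)
          tA tA' tC tC' tB tBm adj_sw adj_B' dB)
    moreover have "distinct (Q m \<beta>)"
      unfolding Q_def using wA wC AA CC nB by (auto simp: distinct_map inj_on_def)
    moreover have "length (Q m \<beta>) - 1 \<le> r+t+5" unfolding Q_def using wA wC by simp
    ultimately show ?thesis unfolding e3c_path_alt Q_def by simp
  qed
  have Qset: "z \<in> set (Q m \<beta>) \<Longrightarrow> z = (A,B,C,1) \<or> z = (A',B,C',1) \<or> fst (snd z) = B[m:=\<beta>]" for z m \<beta>
    unfolding Q_def by auto
  have P0set: "z \<in> set P0 \<Longrightarrow> fst (snd z) = B" for z
    unfolding P0_def by auto
  have P2set: "z \<in> set P2 \<Longrightarrow> fst (snd z) = B" for z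
    unfolding P2_def by auto
  have P02: "set P0 \<inter> set P2 \<subseteq> {(A,B,C,1),(A',B,C',1)}"
    unfolding P0_def P2_def using AA CC by auto
  have P0ok: "e3c_path r s t (A,B,C,1) (A',B,C',1) P0 \<and> length P0 - 1 \<le> r+t+5"
  proof -
    have "successively (e3c_adj r s t) P0"
      unfolding P0_def using sA[OF tB tC'] sC[OF tA tB]
      by (simp add: successively_append_iff successively_Cons hd_map last_map wA(1,2,3) wC(1,2,3)
          tA tA' tC tC' tB adj_sw)
    moreover have "distinct P0"
      unfolding P0_def using wA wC AA CC by (auto simp: distinct_map inj_on_def)
    moreover have "length P0 - 1 \<le> r+t+5" unfolding P0_def using wA wC by simp
    ultimately show ?thesis unfolding e3c_path_alt P0_def by simp
  qed
  have P2ok: "e3c_path r s t (A,B,C,1) (A',B,C',1) P2 \<and> length P2 - 1 \<le> r+t+5"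
  proof -
    have "successively (e3c_adj r s t) P2"
      unfolding P2_def using sA[OF tB tC] sC[OF tA' tB]
      by (simp add: successively_append_iff successively_Cons hd_map last_map wA(1,2,3) wC(1,2,3)
          tA tA' tC tC' tB adj_sw)
    moreover have "distinct P2"
      unfolding P2_def using wA wC AA CC by (auto simp: distinct_map inj_on_def)
    moreover have "length P2 - 1 \<le> r+t+5" unfolding P2_def using wA wC by simp
    ultimately show ?thesis unfolding e3c_path_alt P2_def by simp
  qed
  have disj: "set (F x) \<inter> set (F y) \<subseteq> {(A,B,C,1),(A',B,C',1)}"
    if x: "x \<in> set (idx B r)" and y: "y \<in> set (idx B r)" and xy: "x \<noteq> y" for x y
  proof -
    obtain m \<beta> m' \<beta>' where xe: "x = (m,\<beta>)" and ye: "y = (m',\<beta>')" by (cases x, cases y)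
    note cx = set_idx[OF x, unfolded xe, simplified] and cy = set_idx[OF y, unfolded ye, simplified]
    show ?thesis
    proof (cases "m < r")
      case True
      note mr = True
      have Fx: "F x = Q m \<beta>" by (simp add: F_def xe mr)
      have nB: "B[m:=\<beta>] \<noteq> B" using upd_neq[of m B \<beta>] cx mr rs lA by auto
      show ?thesis
      proof (cases "m' < r")
        case True
        have Fy: "F y = Q m' \<beta>'" by (simp add: F_def ye True)
        have "B[m:=\<beta>] \<noteq> B[m':=\<beta>']"
          using upd_inj[of m B m' \<beta> \<beta>'] cx cy mr True rs lA xy xe ye by auto
        then show ?thesis unfolding Fx Fy
        proof -
          assume nB': "B[m:=\<beta>] \<noteq> B[m':=\<beta>']"
          show "set (Q m \<beta>) \<inter> set (Q m' \<beta>') \<subseteq> {(A,B,C,1),(A',B,C',1)}"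
          proof
            fix z assume z: "z \<in> set (Q m \<beta>) \<inter> set (Q m' \<beta>')"
            have "z = (A,B,C,1) \<or> z = (A',B,C',1) \<or> fst (snd z) = B[m:=\<beta>]" using z Qset by blast
            moreover have "z = (A,B,C,1) \<or> z = (A',B,C',1) \<or> fst (snd z) = B[m':=\<beta>']" using z Qset by blast
            ultimately show "z \<in> {(A,B,C,1),(A',B,C',1)}" using nB' by auto
          qed
        qed
      next
        case False
        have Fy: "F y = (if \<beta>' = 0 then P0 else P2)" by (simp add: F_def ye False)
        show ?thesis unfolding Fx Fy
        proof
          fix z assume z: "z \<in> set (Q m \<beta>) \<inter> set (if \<beta>' = 0 then P0 else P2)"
          then have "fst (snd z) = B" using P0set P2set by (cases "\<beta>' = 0") auto
          moreover have "z = (A,B,C,1) \<or> z = (A',B,C',1) \<or> fst (snd z) = B[m:=\<beta>]" using z Qset by blast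
          ultimately show "z \<in> {(A,B,C,1),(A',B,C',1)}" using nB by auto
        qed
      qed
    next
      case False
      note mr = False
      have Fx: "F x = (if \<beta> = 0 then P0 else P2)" by (simp add: F_def xe mr)
      show ?thesis
      proof (cases "m' < r")
        case True
        have Fy: "F y = Q m' \<beta>'" by (simp add: F_def ye True)
        have "B[m':=\<beta>'] \<noteq> B" using upd_neq[of m' B \<beta>'] cy True rs lA by auto
        then show ?thesis unfolding Fx Fy
        proof -
          assume nB': "B[m':=\<beta>'] \<noteq> B"
          show "set (if \<beta> = 0 then P0 else P2) \<inter> set (Q m' \<beta>') \<subseteq> {(A,B,C,1),(A',B,C',1)}"
          proof
            fix z assume z: "z \<in> set (if \<beta> = 0 then P0 else P2) \<inter> set (Q m' \<beta>')"
            then have "fst (snd z) = B" using P0set P2set by (cases "\<beta> = 0") auto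
            moreover have "z = (A,B,C,1) \<or> z = (A',B,C',1) \<or> fst (snd z) = B[m':=\<beta>']" using z Qset by blast
            ultimately show "z \<in> {(A,B,C,1),(A',B,C',1)}" using nB' by auto
          qed
        qed
      next
        case False
        have Fy: "F y = (if \<beta>' = 0 then P0 else P2)" by (simp add: F_def ye False)
        have "m = r" "m' = r" using cx cy mr False by auto
        then have "\<beta> \<noteq> \<beta>'" using xy xe ye by auto
        then have "(\<beta> = 0 \<and> \<beta>' = 1) \<or> (\<beta> = 1 \<and> \<beta>' = 0)" using cx cy mr False by auto
        then show ?thesis unfolding Fx Fy using P02 by auto
      qed
    qed
  qed
  have Fok: "e3c_path r s t (A,B,C,1) (A',B,C',1) (F x) \<and> length (F x) - 1 \<le> r+t+5"
    if x: "x \<in> set (idx B r)" for x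
  proof -
    obtain m \<beta> where xe: "x = (m,\<beta>)" by (cases x)
    show ?thesis using set_idx[OF x] Qok[of m \<beta>] P0ok P2ok unfolding F_def xe by auto
  qed
  have "internally_disjoint (A,B,C,1) (A',B,C',1) (map F (idx B r))"
    by (rule idisj_map[OF distinct_idx disj])
  moreover have "\<forall>p\<in>set (map F (idx B r)). e3c_path r s t (A,B,C,1) (A',B,C',1) p \<and> length p - 1 \<le> r+t+5"
    using Fok by auto
  ultimately show ?thesis by (intro exI[of _ "map F (idx B r)"]) (simp add: length_idx)
qed



lemma butlast_walk: "W \<in> set (butlast (walk X Y ps)) \<Longrightarrow> \<exists>m<length ps. W = ov X Y (set (take m ps))"
proof -
  assume W: "W \<in> set (butlast (walk X Y ps))"
  have "butlast (walk X Y ps) = map (\<lambda>m. ov X Y (set (take m ps))) [0..<length ps]"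
    unfolding walk_def by (simp add: map_butlast[symmetric] del: upt_Suc) (simp)
  with W show ?thesis by auto
qed

lemma last_notin_butlast: "distinct xs \<Longrightarrow> x \<in> set (butlast xs) \<Longrightarrow> x \<noteq> last xs"
  by (metis append_butlast_last_id butlast.simps(1) distinct_append empty_iff empty_set
      disjoint_iff list.set_intros(1))

definition ordL :: "nat list \<Rightarrow> nat list \<Rightarrow> nat \<Rightarrow> nat \<Rightarrow> nat list" where
  "ordL A A' r i = filter (\<lambda>p. A!p \<noteq> A'!p) ([Suc i..<r] @ [0..<i])"

definition ord :: "nat list \<Rightarrow> nat list \<Rightarrow> nat \<Rightarrow> nat \<Rightarrow> nat \<Rightarrow> nat list" where
  "ord A A' r i a = ordL A A' r i @ (if a \<noteq> A'!i then [i] else [])"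

definition key :: "nat \<Rightarrow> nat \<Rightarrow> nat \<Rightarrow> nat" where
  "key r i p = (if i < p then p - i else p + r - i)"

lemma set_ordL: "i < r \<Longrightarrow> set (ordL A A' r i) = {p. p < r \<and> p \<noteq> i \<and> A!p \<noteq> A'!p}"
  by (auto simp: ordL_def)

lemma distinct_ordL: "distinct (ordL A A' r i)"
  by (auto simp: ordL_def)

lemma length_ordL: "i < r \<Longrightarrow> length (ordL A A' r i) \<le> r - 1"
proof -
  assume "i < r"
  have "length (ordL A A' r i) \<le> length ([Suc i..<r] @ [0..<i])"
    unfolding ordL_def by (rule length_filter_le)
  also have "\<dots> = r - 1" using \<open>i < r\<close> by simp
  finally show ?thesis .
qed

lemma sorted_ordL: "i < r \<Longrightarrow> sorted_wrt (\<lambda>p q. key r i p < key r i q) (ordL A A' r i)"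
  unfolding ordL_def
  apply (rule sorted_wrt_filter)
  apply (simp add: sorted_wrt_append)
  apply (intro conjI)
    apply (rule sorted_wrt_mono_rel[OF _ sorted_wrt_upt]; auto simp: key_def)
   apply (rule sorted_wrt_mono_rel[OF _ sorted_wrt_upt]; auto simp: key_def)
  apply (auto simp: key_def)
  done

lemma ord_set: "length A = r \<Longrightarrow> i < r \<Longrightarrow>
  set (ord A A' r i a) = {p. p < r \<and> A[i:=a]!p \<noteq> A'!p}"
  by (auto simp: ord_def set_ordL nth_list_update split: if_splits)

lemma ord_ok: "length A = r \<Longrightarrow> length A' = r \<Longrightarrow> i < r \<Longrightarrow> okps (A[i:=a]) A' (ord A A' r i a)"
  unfolding okps_def using ord_set[of A r i A' a]
  by (auto simp: ord_def distinct_ordL set_ordL)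

lemma ord_len: "i < r \<Longrightarrow> length (ord A A' r i a) \<le> r"
  using length_ordL[of i r A A'] by (auto simp: ord_def)

lemma i_notin_take: "i < r \<Longrightarrow> m < length (ord A A' r i a) \<Longrightarrow> i \<notin> set (take m (ord A A' r i a))"
proof -
  assume h: "i < r" "m < length (ord A A' r i a)"
  have "set (take m (ord A A' r i a)) \<subseteq> set (ordL A A' r i)"
    using h set_take_subset[of m "ordL A A' r i"] by (auto simp: ord_def split: if_splits)
  then show ?thesis using h by (auto simp: set_ordL)
qed

lemma key_contra:
  assumes "i < r" "j < r" "x < r" "i \<noteq> j" "x \<noteq> i" "x \<noteq> j"
    "key r i j < key r i x" "key r j i < key r j x"
  shows False
  using assms by (auto simp: key_def split: if_splits)

lemma take_drop_key:
  assumes "sorted_wrt (\<lambda>p q. key r i p < key r i q) xs" "y \<in> set (take m xs)" "x \<in> set (drop m xs)"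
  shows "key r i y < key r i x"
  using assms(1) assms(2,3) unfolding sorted_wrt_append[of _ "take m xs" "drop m xs", simplified] by blast

lemma TT:
  assumes len: "length A = r" "length A' = r"
    and i: "i < r" and j: "j < r" and a: "a \<noteq> A!i" and b: "b \<noteq> A!j" and ij: "(i,a) \<noteq> (j,b)"
    and Wi: "W \<in> set (butlast (walk (A[i:=a]) A' (ord A A' r i a)))"
    and Wj: "W \<in> set (butlast (walk (A[j:=b]) A' (ord A A' r j b)))"
  shows False
proof -
  obtain m where m: "m < length (ord A A' r i a)" and Wm: "W = ov (A[i:=a]) A' (set (take m (ord A A' r i a)))"
    using butlast_walk[OF Wi] by blast
  obtain m' where m': "m' < length (ord A A' r j b)" and Wm': "W = ov (A[j:=b]) A' (set (take m' (ord A A' r j b)))"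
    using butlast_walk[OF Wj] by blast
  have Wi_i: "W!i = a" using Wm i_notin_take[OF i m] i len by (simp add: nth_ov)
  have Wj_j: "W!j = b" using Wm' i_notin_take[OF j m'] j len by (simp add: nth_ov)
  show False
  proof (cases "i = j")
    case True
    then show False using Wi_i Wj_j ij by simp
  next
    case False
    have "W!i = A!i \<or> W!i = A'!i" using Wm' False i len by (simp add: nth_ov)
    then have ai: "a = A'!i" using Wi_i a by auto
    have "W!j = A!j \<or> W!j = A'!j" using Wm False j len by (simp add: nth_ov)
    then have bj: "b = A'!j" using Wj_j b by auto
    have oi: "ord A A' r i a = ordL A A' r i" using ai by (simp add: ord_def)
    have oj: "ord A A' r j b = ordL A A' r j" using bj by (simp add: ord_def)
    define Li where "Li = ordL A A' r i"
    define Lj where "Lj = ordL A A' r j"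
    have Rchar: "\<And>L k c X. L = ordL A A' r k \<Longrightarrow> k < r \<Longrightarrow> c = A'!k \<Longrightarrow> X = ov (A[k:=c]) A' (set (take n L))
       \<Longrightarrow> {p. p < r \<and> X!p \<noteq> A'!p} = set L - set (take n L)" for n
    proof -
      fix L k c X assume h: "L = ordL A A' r k" "k < r" "c = A'!k" "X = ov (A[k:=c]) A' (set (take n L))"
      show "{p. p < r \<and> X!p \<noteq> A'!p} = set L - set (take n L)"
        using h len set_take_subset[of n L]
        by (auto simp: nth_ov set_ordL nth_list_update split: if_splits)
    qed
    have R1: "{p. p < r \<and> W!p \<noteq> A'!p} = set Li - set (take m Li)"
      using Rchar[OF Li_def i ai] Wm oi Li_def by simp
    have R2: "{p. p < r \<and> W!p \<noteq> A'!p} = set Lj - set (take m' Lj)"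
      using Rchar[OF Lj_def j bj] Wm' oj Lj_def by simp
    have mi: "m < length Li" using m oi Li_def by simp
    define x where "x = Li ! m"
    have xdrop: "x \<in> set (drop m Li)" using mi unfolding x_def
      by (metis hd_drop_conv_nth hd_in_set drop_eq_Nil2 not_le)
    have xLi: "x \<in> set Li" using xdrop set_drop_subset by fast
    have xnot: "x \<notin> set (take m Li)"
      using distinct_ordL[of A A' r i] xdrop Li_def
      by (metis append_take_drop_id disjoint_iff distinct_append)
    have xR: "x \<in> set Lj - set (take m' Lj)" using R1 R2 xLi xnot by blast
    have xdrop': "x \<in> set (drop m' Lj)" using xR
      by (metis DiffE Un_iff append_take_drop_id set_append)
    have jLi: "j \<in> set Li" using Li_def set_ordL[OF i] False j b bj by auto
    have jLj: "j \<notin> set Lj" using Lj_def set_ordL[OF j] by auto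
    have jtake: "j \<in> set (take m Li)" using R1 R2 jLi jLj by blast
    have iLj: "i \<in> set Lj" using Lj_def set_ordL[OF j] False i a ai by auto
    have iLi: "i \<notin> set Li" using Li_def set_ordL[OF i] by auto
    have itake: "i \<in> set (take m' Lj)" using R1 R2 iLj iLi by blast
    have k1: "key r i j < key r i x" using take_drop_key[OF sorted_ordL[OF i] jtake[unfolded Li_def] xdrop[unfolded Li_def]] .
    have k2: "key r j i < key r j x" using take_drop_key[OF sorted_ordL[OF j] itake[unfolded Lj_def] xdrop'[unfolded Lj_def]] .
    have "x < r" "x \<noteq> i" "x \<noteq> j" using xLi xR Li_def Lj_def set_ordL[OF i] set_ordL[OF j] by auto
    then show False using key_contra[OF i j _ False _ _ k1 k2] by blast
  qed
qed



lemma exists_diff: "length X = length Y \<Longrightarrow> X \<noteq> Y \<Longrightarrow> \<exists>p < length X. X!p \<noteq> Y!p"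
  using nth_equalityI by blast

lemma butlast_T_i:
  assumes "length A = r" "i < r" "W \<in> set (butlast (walk (A[i:=a]) A' (ord A A' r i a)))"
  shows "W!i = a"
proof -
  obtain m where m: "m < length (ord A A' r i a)" and Wm: "W = ov (A[i:=a]) A' (set (take m (ord A A' r i a)))"
    using butlast_walk[OF assms(3)] by blast
  show ?thesis using Wm i_notin_take[OF assms(2) m] assms by (simp add: nth_ov)
qed

lemma G:
  fixes A B C A' C' :: "nat list"
  assumes s1: "1 \<le> s" and vu: "e3c_vertex r s t (A,B,C,2)" and vv: "e3c_vertex r s t (A',B,C',2)"
    and AA: "A \<noteq> A'" and CC: "C \<noteq> C'"
  shows "\<exists>Ps. length Ps = 2*r+2 \<and> internally_disjoint (A,B,C,2) (A',B,C',2) Ps \<and>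
    (\<forall>p\<in>set Ps. e3c_path r s t (A,B,C,2) (A',B,C',2) p \<and> length p - 1 \<le> r+t+7)"
proof -
  have tA: "tw r A" and tA': "tw r A'" and tB: "tw s B" and tC: "tw t C" and tC': "tw t C'"
    using vu vv by auto
  have lA: "length A = r" "length A' = r" "length B = s" "length C = t" "length C' = t"
    using tA tA' tB tC tC' by (auto simp: ternary_word_def)
  define wA where "wA = walk A A' (dpos A A')"
  define wC where "wC = walk C C' (dpos C C')"
  have wA: "wA \<noteq> []" "hd wA = A" "last wA = A'" "distinct wA" "\<And>W. W \<in> set wA \<Longrightarrow> tw r W"
    "length wA \<le> Suc r"
    using lA tA tA' length_dpos[of A A']
    by (auto simp: wA_def last_walk_dpos distinct_walk_dpos intro: walk_dpos_ternary)
  have wC: "wC \<noteq> []" "hd wC = C" "last wC = C'" "distinct wC" "\<And>W. W \<in> set wC \<Longrightarrow> tw t W"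
    "length wC \<le> Suc t"
    using lA tC tC' length_dpos[of C C']
    by (auto simp: wC_def last_walk_dpos distinct_walk_dpos intro: walk_dpos_ternary)
  have sA: "\<And>B C. tw s B \<Longrightarrow> tw t C \<Longrightarrow> successively (e3c_adj r s t) (map (\<lambda>W. (W,B,C,2::nat)) wA)"
    unfolding wA_def using lA by (intro layerA tA tA' dpos_ok) auto
  have sC: "\<And>A B. tw r A \<Longrightarrow> tw s B \<Longrightarrow> successively (e3c_adj r s t) (map (\<lambda>W. (A,B,W,0::nat)) wC)"
    unfolding wC_def using lA by (intro layerC tC tC' dpos_ok) auto
  obtain jc where jc: "jc < t" "C!jc \<noteq> C'!jc" using exists_diff[of C C'] lA CC by auto
  have c3: "C!jc < 3" "C'!jc < 3" using tC tC' jc lA by (auto simp: ternary_word_def)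
  define cs where "cs = 3 - C!jc - C'!jc"
  have cs: "cs < 3" "cs \<noteq> C!jc" "cs \<noteq> C'!jc" using c3 jc(2) unfolding cs_def by presburger+
  define Cs where "Cs = C[jc:=cs]"
  have tCs: "tw t Cs" unfolding Cs_def using upd_tw[OF tC jc(1) cs(1)] .
  have CsC: "Cs \<noteq> C" "Cs \<noteq> C'" unfolding Cs_def using jc cs lA
    by (metis nth_list_update_eq)+
  have dCs: "differ_one C Cs" unfolding Cs_def using differ_one_upd jc cs lA by auto
  define wCs where "wCs = walk Cs C' (dpos Cs C')"
  have lCs: "length Cs = t" using tCs by (simp add: ternary_word_def)
  have wCs: "wCs \<noteq> []" "hd wCs = Cs" "last wCs = C'" "distinct wCs" "length wCs \<le> Suc t"
    using lA lCs length_dpos[of Cs C']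
    by (auto simp: wCs_def last_walk_dpos distinct_walk_dpos)
  have sCs: "\<And>A B. tw r A \<Longrightarrow> tw s B \<Longrightarrow> successively (e3c_adj r s t) (map (\<lambda>W. (A,B,W,0::nat)) wCs)"
    unfolding wCs_def using lA lCs by (intro layerC tCs tC' dpos_ok) auto
  define Bs where "Bs = B[0:=(B!0+1) mod 3]"
  have tBs: "tw s Bs" unfolding Bs_def using upd_tw[OF tB] s1 by auto
  have bne: "(B!0+1) mod 3 \<noteq> B!0" by presburger
  have BsB: "Bs \<noteq> B" unfolding Bs_def using upd_neq[of 0 B] s1 lA bne by auto
  have dBs: "differ_one B Bs" "differ_one Bs B" unfolding Bs_def
    using differ_one_upd[of 0 B] s1 lA bne differ_one_sym by auto
  define T where "T = (\<lambda>i a. walk (A[i:=a]) A' (ord A A' r i a))"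
  define P where "P = (\<lambda>i a. (A,B,C,2::nat) # (A[i:=a],B,C,2) # map (\<lambda>Y. (A[i:=a],B,Y,0)) wC
      @ map (\<lambda>W. (W,B,C',2)) (T i a))"
  have Tprops: "T i a \<noteq> [] \<and> hd (T i a) = A[i:=a] \<and> last (T i a) = A' \<and> distinct (T i a) \<and>
      length (T i a) \<le> Suc r \<and> successively (e3c_adj r s t) (map (\<lambda>W. (W,B,C',2::nat)) (T i a))"
    if ia: "i < r" "a < 3" for i a
  proof -
    have ok: "okps (A[i:=a]) A' (ord A A' r i a)" using ord_ok[OF lA(1,2) ia(1)] .
    have tAi: "tw r (A[i:=a])" using upd_tw[OF tA] ia by auto
    have "last (T i a) = A'" unfolding T_def
      by (rule last_walk_full[OF ok]) (simp add: ord_set[OF lA(1) ia(1)] lA)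
    moreover have "length (T i a) \<le> Suc r" using ord_len[OF ia(1)] by (simp add: T_def)
    ultimately show ?thesis unfolding T_def
      using distinct_walk[OF ok] layerA[OF tAi tA' ok tB tC'] by simp
  qed
  have Pok: "e3c_path r s t (A,B,C,2) (A',B,C',2) (P i a) \<and> length (P i a) - 1 \<le> r+t+7"
    if ia: "i < r" "a < 3" "a \<noteq> A!i" for i a
  proof -
    have tAi: "tw r (A[i:=a])" using upd_tw[OF tA] ia by auto
    have nA: "A[i:=a] \<noteq> A" using upd_neq[of i A a] ia lA by auto
    have dA: "differ_one A (A[i:=a])" using differ_one_upd[of i A a] ia lA by auto
    note TP = Tprops[OF ia(1,2)]
    have "successively (e3c_adj r s t) (P i a)"
      unfolding P_def using sC[OF tAi tB] TP
      by (simp add: successively_append_iff successively_Cons hd_map last_map wC(1,2,3)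
          tA tA' tC tC' tB tAi adj_sw adj_A dA)
    moreover have "distinct (P i a)"
      unfolding P_def using wC TP nA CC by (auto simp: distinct_map inj_on_def)
    moreover have "length (P i a) - 1 \<le> r+t+7" unfolding P_def using wC TP by simp
    ultimately show ?thesis unfolding e3c_path_alt P_def using TP by (simp add: last_map)
  qed
  have Pset: "z = (A,B,C,2) \<or> z = (A',B,C',2) \<or> z = (A[i:=a],B,C,2) \<or> (\<exists>Y. z = (A[i:=a],B,Y,0)) \<or>
      (\<exists>W\<in>set (butlast (T i a)). z = (W,B,C',2))"
    if ia: "i < r" "a < 3" and z: "z \<in> set (P i a)" for i a z
  proof -
    note TP = Tprops[OF ia(1,2)]
    have e: "T i a = butlast (T i a) @ [A']" using TP append_butlast_last_id[of "T i a"] by simp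
    define bl where "bl = butlast (T i a)"
    have "set (T i a) = insert A' (set bl)"
      using arg_cong[OF e, of set] unfolding bl_def by simp
    then show ?thesis using z unfolding P_def bl_def[symmetric] by auto
  qed
  have Pcoarse: "z = (A,B,C,2) \<or> z = (A',B,C',2) \<or> (fst (snd z) = B \<and> snd (snd (snd z)) \<noteq> 1)"
    if ia: "i < r" "a < 3" and z: "z \<in> set (P i a)" for i a z
  proof -
    note TP = Tprops[OF ia(1,2)]
    show ?thesis using z unfolding P_def by auto
  qed
  have TTf: "False" if ia: "i < r" "a \<noteq> A!i" and jb: "j < r" "b \<noteq> A!j" and ne: "(i,a) \<noteq> (j,b)"
    and W1: "W \<in> set (butlast (T i a))" and W2: "W \<in> set (butlast (T j b))" for i a j b W
    using TT[OF lA(1,2) ia(1) jb(1) ia(2) jb(2) ne] W1 W2 unfolding T_def by blast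
  have PP: "set (P i a) \<inter> set (P j b) \<subseteq> {(A,B,C,2),(A',B,C',2)}"
    if ia: "i < r" "a < 3" "a \<noteq> A!i" and jb: "j < r" "b < 3" "b \<noteq> A!j" and ne: "(i,a) \<noteq> (j,b)" for i a j b
  proof
    fix z assume z: "z \<in> set (P i a) \<inter> set (P j b)"
    have nA: "A[i:=a] \<noteq> A[j:=b]" using upd_inj[of i A j a b] ia jb ne lA by auto
    have TT': "\<And>W. W \<in> set (butlast (T i a)) \<Longrightarrow> W \<in> set (butlast (T j b)) \<Longrightarrow> False"
      using TTf[OF ia(1,3) jb(1,3) ne] by blast
    have z1: "z = (A,B,C,2) \<or> z = (A',B,C',2) \<or> z = (A[i:=a],B,C,2) \<or> (\<exists>Y. z = (A[i:=a],B,Y,0)) \<or>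
      (\<exists>W\<in>set (butlast (T i a)). z = (W,B,C',2))" using Pset[OF ia(1,2)] z by blast
    have z2: "z = (A,B,C,2) \<or> z = (A',B,C',2) \<or> z = (A[j:=b],B,C,2) \<or> (\<exists>Y. z = (A[j:=b],B,Y,0)) \<or>
      (\<exists>W\<in>set (butlast (T j b)). z = (W,B,C',2))" using Pset[OF jb(1,2)] z by blast
    show "z \<in> {(A,B,C,2),(A',B,C',2)}" using z1 z2 nA CC TT' by auto
  qed
  define P0 where "P0 = (A,B,C,2::nat) # (A,B,C,0) # (A,B,Cs,0) # map (\<lambda>W. (W,B,Cs,2)) wA
     @ map (\<lambda>Y. (A',B,Y,0)) wCs @ [(A',B,C',2)]"
  define P0' where "P0' = (A,B,C,2::nat) # map (\<lambda>Y. (A,B,Y,0)) wC @ [(A,B,C',2),(A',B,C',2)]"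
  define P1 where "P1 = (A,B,C,2::nat) # (A,B,C,1) # (A,Bs,C,1) # map (\<lambda>W. (W,Bs,C,2)) wA
     @ map (\<lambda>Y. (A',Bs,Y,0)) wC @ [(A',Bs,C',1),(A',B,C',1),(A',B,C',2)]"
  have P0ok: "e3c_path r s t (A,B,C,2) (A',B,C',2) P0 \<and> length P0 - 1 \<le> r+t+7"
  proof -
    have "successively (e3c_adj r s t) P0"
      unfolding P0_def using sA[OF tB tCs] sCs[OF tA' tB]
      by (simp add: successively_append_iff successively_Cons hd_map last_map wA(1,2,3) wCs(1,2,3)
          tA tA' tC tC' tB tCs adj_sw adj_C dCs)
    moreover have "distinct P0"
      unfolding P0_def using wA wCs AA CC CsC by (auto simp: distinct_map inj_on_def)
    moreover have "length P0 - 1 \<le> r+t+7" unfolding P0_def using wA wCs by simp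
    ultimately show ?thesis unfolding e3c_path_alt P0_def by simp
  qed
  have P0'ok: "e3c_path r s t (A,B,C,2) (A',B,C',2) P0' \<and> length P0' - 1 \<le> r+t+7"
    if dA: "differ_one A A'"
  proof -
    have "successively (e3c_adj r s t) P0'"
      unfolding P0'_def using sC[OF tA tB]
      by (simp add: successively_append_iff successively_Cons hd_map last_map wC(1,2,3)
          tA tA' tC tC' tB adj_sw adj_A dA)
    moreover have "distinct P0'"
      unfolding P0'_def using wC AA CC by (auto simp: distinct_map inj_on_def)
    moreover have "length P0' - 1 \<le> r+t+7" unfolding P0'_def using wC by simp
    ultimately show ?thesis unfolding e3c_path_alt P0'_def by simp
  qed
  have P1ok: "e3c_path r s t (A,B,C,2) (A',B,C',2) P1 \<and> length P1 - 1 \<le> r+t+7"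
  proof -
    have "successively (e3c_adj r s t) P1"
      unfolding P1_def using sA[OF tBs tC] sC[OF tA' tBs]
      by (simp add: successively_append_iff successively_Cons hd_map last_map wA(1,2,3) wC(1,2,3)
          tA tA' tC tC' tB tBs adj_sw adj_B' dBs)
    moreover have "distinct P1"
      unfolding P1_def using wA wC AA CC BsB by (auto simp: distinct_map inj_on_def)
    moreover have "length P1 - 1 \<le> r+t+7" unfolding P1_def using wA wC by simp
    ultimately show ?thesis unfolding e3c_path_alt P1_def by simp
  qed
  have P0set: "z = (A,B,C,2) \<or> z = (A',B,C',2) \<or> z = (A,B,C,0) \<or> z = (A,B,Cs,0) \<or>
      (\<exists>W. z = (W,B,Cs,2)) \<or> (\<exists>Y. z = (A',B,Y,0))" if z: "z \<in> set P0" for z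
    using z unfolding P0_def by auto
  have P0'set: "z = (A,B,C,2) \<or> z = (A',B,C',2) \<or> (\<exists>Y. z = (A,B,Y,0)) \<or> z = (A,B,C',2)"
    if z: "z \<in> set P0'" for z
    using z unfolding P0'_def by auto
  have P1set: "z = (A,B,C,2) \<or> z = (A',B,C',2) \<or> fst (snd z) = Bs \<or> snd (snd (snd z)) = 1"
    if z: "z \<in> set P1" for z
    using z unfolding P1_def by auto
  define Q0 where "Q0 = (if differ_one A A' then P0' else P0)"
  have Q0ok: "e3c_path r s t (A,B,C,2) (A',B,C',2) Q0 \<and> length Q0 - 1 \<le> r+t+7"
    unfolding Q0_def using P0ok P0'ok by auto
  have Q0coarse: "z = (A,B,C,2) \<or> z = (A',B,C',2) \<or> (fst (snd z) = B \<and> snd (snd (snd z)) \<noteq> 1)"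
    if z: "z \<in> set Q0" for z
  proof (cases "differ_one A A'")
    case True then show ?thesis using P0'set[of z] z unfolding Q0_def by auto
  next
    case False then show ?thesis using P0set[of z] z unfolding Q0_def by auto
  qed
  have PQ0: "set (P i a) \<inter> set Q0 \<subseteq> {(A,B,C,2),(A',B,C',2)}"
    if ia: "i < r" "a < 3" "a \<noteq> A!i" for i a
  proof
    fix z assume z: "z \<in> set (P i a) \<inter> set Q0"
    have nA: "A[i:=a] \<noteq> A" using upd_neq[of i A a] ia lA by auto
    have z1: "z = (A,B,C,2) \<or> z = (A',B,C',2) \<or> z = (A[i:=a],B,C,2) \<or> (\<exists>Y. z = (A[i:=a],B,Y,0)) \<or>
      (\<exists>W\<in>set (butlast (T i a)). z = (W,B,C',2))" using Pset[OF ia(1,2)] z by blast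
    show "z \<in> {(A,B,C,2),(A',B,C',2)}"
    proof (cases "differ_one A A'")
      case True
      have zz: "z = (A,B,C,2) \<or> z = (A',B,C',2) \<or> (\<exists>Y. z = (A,B,Y,0)) \<or> z = (A,B,C',2)"
        using P0'set z True unfolding Q0_def by auto
      have nW: "A \<notin> set (butlast (T i a))"
        using butlast_T_i[OF lA(1) ia(1), of A a A'] ia(3) unfolding T_def by auto
      show ?thesis using z1 zz nA CC nW by auto
    next
      case False
      have zz: "z = (A,B,C,2) \<or> z = (A',B,C',2) \<or> z = (A,B,C,0) \<or> z = (A,B,Cs,0) \<or>
        (\<exists>W. z = (W,B,Cs,2)) \<or> (\<exists>Y. z = (A',B,Y,0))"
        using P0set z False unfolding Q0_def by auto
      have nA': "A[i:=a] \<noteq> A'" using False differ_one_upd[of i A a] ia lA by auto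
      show ?thesis using z1 zz nA nA' CC CsC by auto
    qed
  qed
  have PP1: "set (P i a) \<inter> set P1 \<subseteq> {(A,B,C,2),(A',B,C',2)}"
    if ia: "i < r" "a < 3" for i a
  proof
    fix z assume z: "z \<in> set (P i a) \<inter> set P1"
    show "z \<in> {(A,B,C,2),(A',B,C',2)}"
      using Pcoarse[OF ia, of z] P1set[of z] z BsB by auto
  qed
  have Q0P1: "set Q0 \<inter> set P1 \<subseteq> {(A,B,C,2),(A',B,C',2)}"
  proof
    fix z assume z: "z \<in> set Q0 \<inter> set P1"
    show "z \<in> {(A,B,C,2),(A',B,C',2)}"
      using Q0coarse[of z] P1set[of z] z BsB by auto
  qed
  define F where "F = (\<lambda>(i,a). if i < r then P i a else if a = 0 then Q0 else P1)"
  have disj: "set (F x) \<inter> set (F y) \<subseteq> {(A,B,C,2),(A',B,C',2)}"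
    if x: "x \<in> set (idx A r)" and y: "y \<in> set (idx A r)" and xy: "x \<noteq> y" for x y
  proof -
    obtain i a j b where xe: "x = (i,a)" and ye: "y = (j,b)" by (cases x, cases y)
    note cx = set_idx[OF x, unfolded xe, simplified] and cy = set_idx[OF y, unfolded ye, simplified]
    show ?thesis
    proof (cases "i < r")
      case True
      note ir = True
      have Fx: "F x = P i a" by (simp add: F_def xe ir)
      show ?thesis
      proof (cases "j < r")
        case True
        have Fy: "F y = P j b" by (simp add: F_def ye True)
        show ?thesis unfolding Fx Fy using PP[of i a j b] cx cy ir True xy xe ye by auto
      next
        case False
        have Fy: "F y = (if b = 0 then Q0 else P1)" by (simp add: F_def ye False)
        show ?thesis unfolding Fx Fy using PQ0[of i a] PP1[of i a] cx ir by auto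
      qed
    next
      case False
      note ir = False
      have Fx: "F x = (if a = 0 then Q0 else P1)" by (simp add: F_def xe ir)
      show ?thesis
      proof (cases "j < r")
        case True
        have Fy: "F y = P j b" by (simp add: F_def ye True)
        show ?thesis unfolding Fx Fy using PQ0[of j b] PP1[of j b] cy True by auto
      next
        case False
        have Fy: "F y = (if b = 0 then Q0 else P1)" by (simp add: F_def ye False)
        have "i = r" "j = r" using cx cy ir False by auto
        then have "a \<noteq> b" using xy xe ye by auto
        then have "(a = 0 \<and> b = 1) \<or> (a = 1 \<and> b = 0)" using cx cy ir False by auto
        then show ?thesis unfolding Fx Fy using Q0P1 by auto
      qed
    qed
  qed
  have Fok: "e3c_path r s t (A,B,C,2) (A',B,C',2) (F x) \<and> length (F x) - 1 \<le> r+t+7"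
    if x: "x \<in> set (idx A r)" for x
  proof -
    obtain i a where xe: "x = (i,a)" by (cases x)
    show ?thesis using set_idx[OF x] Pok[of i a] Q0ok P1ok unfolding F_def xe by auto
  qed
  have "internally_disjoint (A,B,C,2) (A',B,C',2) (map F (idx A r))"
    by (rule idisj_map[OF distinct_idx disj])
  moreover have "\<forall>p\<in>set (map F (idx A r)). e3c_path r s t (A,B,C,2) (A',B,C',2) p \<and> length p - 1 \<le> r+t+7"
    using Fok by auto
  ultimately show ?thesis by (intro exI[of _ "map F (idx A r)"]) (simp add: length_idx)
qed



definition phi :: "e3vert \<Rightarrow> e3vert" where
  "phi x = (case x of (A,B,C,d) \<Rightarrow> (C,B,A, if d \<le> 2 then 2 - d else d))"

lemma phi_phi[simp]: "phi (phi x) = x"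
  by (cases x) (auto simp: phi_def)

lemma inj_phi: "inj phi"
  by (metis injI phi_phi)

lemma phi_adj: "e3c_adj t s r x y \<Longrightarrow> e3c_adj r s t (phi x) (phi y)"
  by (cases x; cases y) (auto simp: e3c_adj_def phi_def e3c_vertex_def)

lemma phi_path: "e3c_path t s r u v p \<Longrightarrow> e3c_path r s t (phi u) (phi v) (map phi p)"
  unfolding e3c_path_alt
  by (auto simp: hd_map last_map distinct_map inj_on_def successively_map
      intro: successively_mono phi_adj dest: inj_phi[THEN injD])

lemma phi_idisj: "internally_disjoint u v Ps \<Longrightarrow> internally_disjoint (phi u) (phi v) (map (map phi) Ps)"
  unfolding internally_disjoint_def
proof (intro allI impI)
  fix i j assume h: "\<forall>i j. i < length Ps \<and> j < length Ps \<and> i \<noteq> j \<longrightarrow> set (Ps ! i) \<inter> set (Ps ! j) \<subseteq> {u, v}"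
    and ij: "i < length (map (map phi) Ps) \<and> j < length (map (map phi) Ps) \<and> i \<noteq> j"
  have "set (Ps ! i) \<inter> set (Ps ! j) \<subseteq> {u, v}" using h ij by auto
  then have "phi ` (set (Ps ! i) \<inter> set (Ps ! j)) \<subseteq> {phi u, phi v}" by auto
  then show "set (map (map phi) Ps ! i) \<inter> set (map (map phi) Ps ! j) \<subseteq> {phi u, phi v}"
    using ij by (simp add: image_Int[OF inj_phi, symmetric])
qed

lemma idisj_take: "internally_disjoint u v Ps \<Longrightarrow> internally_disjoint u v (take n Ps)"
  unfolding internally_disjoint_def by auto

theorem lemma11:
  fixes r s t :: nat and A B C A' C' :: "nat list" and d :: nat
  assumes "1 \<le> r" "r \<le> s" "s \<le> t"
    and "e3c_vertex r s t (A, B, C, d)" and "e3c_vertex r s t (A', B, C', d)"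
    and "A \<noteq> A'" and "C \<noteq> C'"
  shows "\<exists>Ps. length Ps = 2 * r + 2 \<and>
           internally_disjoint (A, B, C, d) (A', B, C', d) Ps \<and>
           (\<forall>p\<in>set Ps. e3c_path r s t (A, B, C, d) (A', B, C', d) p \<and>
              length p - 1 \<le> (if d = 1 then r + t + 5 else r + t + 7))"
proof -
  have d3: "d < 3" using assms(4) by simp
  consider "d = 0" | "d = 1" | "d = 2" using d3 by linarith
  then show ?thesis
  proof cases
    case 2
    then show ?thesis using D1[OF assms(2)] assms(4-7) by simp
  next
    case 3
    then show ?thesis using G[of s r t A B C A' C'] assms by simp
  next
    case 1
    have v1: "e3c_vertex t s r (C,B,A,2)" "e3c_vertex t s r (C',B,A',2)" using assms(4,5) 1 by auto
    obtain Ps where Ps: "length Ps = 2*t+2" "internally_disjoint (C,B,A,2) (C',B,A',2) Ps"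
      "\<forall>p\<in>set Ps. e3c_path t s r (C,B,A,2) (C',B,A',2) p \<and> length p - 1 \<le> t+r+7"
      using G[OF _ v1 assms(7) assms(6)] assms(1,2) by auto
    define Qs where "Qs = take (2*r+2) (map (map phi) Ps)"
    have pu: "phi (C,B,A,2) = (A,B,C,0)" "phi (C',B,A',2) = (A',B,C',0)" by (simp_all add: phi_def)
    have "length Qs = 2*r+2" using Ps(1) assms(2,3) by (simp add: Qs_def)
    moreover have "internally_disjoint (A,B,C,0) (A',B,C',0) Qs"
      unfolding Qs_def using idisj_take[OF phi_idisj[OF Ps(2)]] pu by simp
    moreover have "\<forall>p\<in>set Qs. e3c_path r s t (A,B,C,0) (A',B,C',0) p \<and> length p - 1 \<le> r+t+7"
    proof
      fix p assume "p \<in> set Qs"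
      then have "p \<in> set (map (map phi) Ps)" unfolding Qs_def by (meson in_set_takeD)
      then obtain q where q: "q \<in> set Ps" "p = map phi q" by auto
      show "e3c_path r s t (A,B,C,0) (A',B,C',0) p \<and> length p - 1 \<le> r+t+7"
        using phi_path[of t s r "(C,B,A,2)" "(C',B,A',2)" q] Ps(3) q pu by auto
    qed
    ultimately show ?thesis using 1 by (intro exI[of _ Qs]) simp
  qed
qed

end
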